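(* Let $n\ge 2$, $\omega\in\mathbb{R}^n$ and $k\in\mathbb{R}_{>0}^n$ satisfy (IC1) $\omega_1+\cdots+\omega_n=0$, (IC2) $\omega\neq(0,\ldots,0)$, and (IC3) $k_1,\ldots,k_n>0$ with $\left|\frac{\omega_1}{k_1}\right|\le\left|\frac{\omega_2}{k_2}\right|\le\cdots\le\left|\frac{\omega_n}{k_n}\right|$. Let $\Theta_{\omega,k}$ be the set of all $\theta\in(-\pi,\pi]^n$ such that $$\omega_\nu=\frac1n\sum_{\mu=1}^n k_\nu k_\mu\sin(\theta_\nu-\theta_\mu)\quad\text{for }\nu=1,\ldots,n$$ and (OC1) $\sum_{\mu=1}^n k_\mu e^{i\theta_\mu}\in\mathbb{R}_{\ge0}$. Then $$\Theta_{\omega,k}=\bigcup_{\sigma\in\{-1,+1\}^n}\Theta_{\omega,k,\sigma},$$ where $$\Theta_{\omega,k,\sigma}=\bigcup_{R\in\mathcal{R}_{\omega,k,\sigma}}\left\{\theta\in(-\pi,\pi]^n:\ \sin\theta_\nu=\frac{\omega_\nu}{k_\nu\sqrt R}\text{ and }\operatorname{sign}\cos\theta_\nu=\sigma_\nu\text{ for }\nu=1,\ldots,n\right\},$$ $$\mathcal{R}_{\omega,k,\sigma}=\left\{R\in\mathbb{R}_{>0}:\ R=\frac1n\sum_{\mu=1}^n\sigma_\mu\sqrt{k_\mu^2R-\omega_\mu^2}\right\}.$$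
   Context: Square roots denote the nonnegative real square root; membership $R\in\mathcal{R}_{\omega,k,\sigma}$ requires the equation to hold in the reals, i.e. with $k_\mu^2R-\omega_\mu^2\ge0$ for all $\mu$. The elements of $\Theta_{\omega,k}$ are the equilibria of the rank-one coupled Kuramoto model $\frac{d\theta_\nu}{dt}=\omega_\nu-\frac1n\sum_{\mu}k_\nu k_\mu\sin(\theta_\nu-\theta_\mu)$, normalized by (OC1) to select representatives modulo a common shift of all angles. *)

theory Defs
  imports "HOL-Analysis.Analysis" "HOL-Library.FuncSet"
begin

text \<open>Indices are 0,...,n-1 (shifted from 1,...,n). Vectors in R^n are
  functions nat => real restricted to {0..<n}; angle vectors are extensional
  functions in {0..<n} ->E (-pi,pi].\<close>

text \<open>Sign with values in {-1,+1}; convention sign 0 = +1.\<close>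
definition sign_pm :: "real \<Rightarrow> real" where
  "sign_pm x = (if x < 0 then -1 else 1)"

definition Theta :: "nat \<Rightarrow> (nat \<Rightarrow> real) \<Rightarrow> (nat \<Rightarrow> real) \<Rightarrow> (nat \<Rightarrow> real) set" where
  "Theta n \<omega> k = {\<theta> \<in> {0..<n} \<rightarrow>\<^sub>E {-pi<..pi}.
      (\<forall>\<nu><n. \<omega> \<nu> = (1 / real n) * (\<Sum>\<mu><n. k \<nu> * k \<mu> * sin (\<theta> \<nu> - \<theta> \<mu>)))
    \<and> (\<Sum>\<mu><n. complex_of_real (k \<mu>) * exp (\<i> * complex_of_real (\<theta> \<mu>))) \<in> complex_of_real ` {0..}}"

text \<open>The set R_{omega,k,sigma}; the equation is required to hold in the reals.\<close>
definition Rset :: "nat \<Rightarrow> (nat \<Rightarrow> real) \<Rightarrow> (nat \<Rightarrow> real) \<Rightarrow> (nat \<Rightarrow> real) \<Rightarrow> real set" where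
  "Rset n \<omega> k \<sigma> = {R. R > 0 \<and> (\<forall>\<mu><n. (k \<mu>)\<^sup>2 * R - (\<omega> \<mu>)\<^sup>2 \<ge> 0)
      \<and> R = (1 / real n) * (\<Sum>\<mu><n. \<sigma> \<mu> * sqrt ((k \<mu>)\<^sup>2 * R - (\<omega> \<mu>)\<^sup>2))}"

definition Theta_sigma :: "nat \<Rightarrow> (nat \<Rightarrow> real) \<Rightarrow> (nat \<Rightarrow> real) \<Rightarrow> (nat \<Rightarrow> real) \<Rightarrow> (nat \<Rightarrow> real) set" where
  "Theta_sigma n \<omega> k \<sigma> = (\<Union>R \<in> Rset n \<omega> k \<sigma>.
      {\<theta> \<in> {0..<n} \<rightarrow>\<^sub>E {-pi<..pi}.
        \<forall>\<nu><n. sin (\<theta> \<nu>) = \<omega> \<nu> / (k \<nu> * sqrt R) \<and> sign_pm (cos (\<theta> \<nu>)) = \<sigma> \<nu>})"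

end

theory Submission
  imports Defs
begin

lemma sum_exp_complex:
  fixes k \<theta> :: "nat \<Rightarrow> real"
  shows
  "(\<Sum>\<mu><n. complex_of_real (k \<mu>) * exp (\<i> * complex_of_real (\<theta> \<mu>)))
   = Complex (\<Sum>\<mu><n. k \<mu> * cos (\<theta> \<mu>)) (\<Sum>\<mu><n. k \<mu> * sin (\<theta> \<mu>))"
  by (simp add: complex_eq_iff Re_exp Im_exp)

lemma in_nonneg_reals: "z \<in> complex_of_real ` {0..} \<longleftrightarrow> Im z = 0 \<and> Re z \<ge> 0"
proof
  assume "z \<in> complex_of_real ` {0..}" then show "Im z = 0 \<and> Re z \<ge> 0" by auto
next
  assume "Im z = 0 \<and> Re z \<ge> 0"
  then have "z = complex_of_real (Re z)" by (simp add: complex_eq_iff)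
  then show "z \<in> complex_of_real ` {0..}" using \<open>Im z = 0 \<and> Re z \<ge> 0\<close> by auto
qed

lemma eq_expand:
  fixes k \<theta> :: "nat \<Rightarrow> real" and kv t :: real
  shows
  "(\<Sum>\<mu><n. kv * k \<mu> * sin (t - \<theta> \<mu>)) =
    kv * (sin t * (\<Sum>\<mu><n. k \<mu> * cos (\<theta> \<mu>)) - cos t * (\<Sum>\<mu><n. k \<mu> * sin (\<theta> \<mu>)))"
proof -
  have "(\<Sum>\<mu><n. kv * k \<mu> * sin (t - \<theta> \<mu>)) =
     (\<Sum>\<mu><n. kv * sin t * (k \<mu> * cos (\<theta> \<mu>)) - kv * cos t * (k \<mu> * sin (\<theta> \<mu>)))"
    unfolding sin_diff by (simp add: algebra_simps)
  also have "\<dots> = kv * sin t * (\<Sum>\<mu><n. k \<mu> * cos (\<theta> \<mu>)) - kv * cos t * (\<Sum>\<mu><n. k \<mu> * sin (\<theta> \<mu>))"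
    by (simp add: sum_subtractf sum_distrib_left)
  finally show ?thesis by (simp add: algebra_simps)
qed

lemma sign_abs: "sign_pm x * \<bar>x\<bar> = x"
  by (simp add: sign_pm_def)

lemma cos_from_sin:
  assumes s: "s > 0" "s = sqrt R" and kp: "k > 0"
    and sn: "sin t = w / (k * s)" and nn: "k\<^sup>2 * R - w\<^sup>2 \<ge> 0"
  shows "k * cos t = sign_pm (cos t) * sqrt (k\<^sup>2 * R - w\<^sup>2) / s"
proof -
  define X where "X = k\<^sup>2 * R - w\<^sup>2"
  have X0: "X \<ge> 0" using nn X_def by simp
  have R: "R = s\<^sup>2" using s by simp
  have ks: "k * s > 0" using s kp by simp
  have "(cos t)\<^sup>2 = 1 - (sin t)\<^sup>2" by (simp add: cos_squared_eq)
  also have "\<dots> = 1 - w\<^sup>2 / (k * s)\<^sup>2" by (simp add: sn power_divide)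
  also have "\<dots> = (k\<^sup>2 * s\<^sup>2 - w\<^sup>2) / (k * s)\<^sup>2"
    using ks s kp by (simp add: diff_divide_distrib power_mult_distrib)
  also have "\<dots> = X / (k * s)\<^sup>2" by (simp add: X_def R)
  also have "\<dots> = (sqrt X / (k * s))\<^sup>2" using X0 by (simp add: power_divide)
  finally have c2: "(cos t)\<^sup>2 = (sqrt X / (k * s))\<^sup>2" .
  have "\<bar>cos t\<bar> = \<bar>sqrt X / (k * s)\<bar>"
    using arg_cong[OF c2, of sqrt] by simp
  also have "\<dots> = sqrt X / (k * s)" using ks X0 by simp
  finally have "k * \<bar>cos t\<bar> = sqrt X / s" using kp by simp
  moreover have "k * cos t = sign_pm (cos t) * (k * \<bar>cos t\<bar>)"
    using sign_abs[of "cos t"] by (simp add: algebra_simps)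
  ultimately show ?thesis by (simp add: X_def)
qed
theorem theorem1:
  fixes n :: nat and \<omega> k :: "nat \<Rightarrow> real"
  assumes "n \<ge> 2"
    and IC1: "(\<Sum>\<nu><n. \<omega> \<nu>) = 0"
    and IC2: "\<exists>\<nu><n. \<omega> \<nu> \<noteq> 0"
    and IC3_pos: "\<forall>\<nu><n. k \<nu> > 0"
    and IC3_ord: "\<forall>\<nu>. \<nu> + 1 < n \<longrightarrow> \<bar>\<omega> \<nu> / k \<nu>\<bar> \<le> \<bar>\<omega> (\<nu> + 1) / k (\<nu> + 1)\<bar>"
  shows "Theta n \<omega> k = (\<Union>\<sigma> \<in> {0..<n} \<rightarrow>\<^sub>E {-1, 1}. Theta_sigma n \<omega> k \<sigma>)"
proof (intro equalityI subsetI)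
  have np: "real n > 0" using assms(1) by simp
  fix \<theta> assume th: "\<theta> \<in> Theta n \<omega> k"
  define C where "C = (\<Sum>\<mu><n. k \<mu> * cos (\<theta> \<mu>))"
  define S where "S = (\<Sum>\<mu><n. k \<mu> * sin (\<theta> \<mu>))"
  have thE: "\<theta> \<in> {0..<n} \<rightarrow>\<^sub>E {-pi<..pi}" using th by (simp add: Theta_def)
  have eqs: "\<And>\<nu>. \<nu> < n \<Longrightarrow> \<omega> \<nu> = (1 / real n) * (k \<nu> * (sin (\<theta> \<nu>) * C - cos (\<theta> \<nu>) * S))"
    using th unfolding Theta_def C_def S_def by (simp add: eq_expand)
  have "S = 0 \<and> C \<ge> 0" using th unfolding Theta_def C_def S_def
    by (simp add: sum_exp_complex in_nonneg_reals)
  then have S0: "S = 0" and C0: "C \<ge> 0" by auto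
  have eqs2: "\<And>\<nu>. \<nu> < n \<Longrightarrow> \<omega> \<nu> = k \<nu> * sin (\<theta> \<nu>) * (C / real n)"
    using eqs S0 by simp
  have Cp: "C > 0"
  proof (rule ccontr)
    assume "\<not> C > 0" then have "C = 0" using C0 by simp
    then show False using IC2 eqs2 by auto
  qed
  define s where "s = C / real n"
  define R where "R = s\<^sup>2"
  have sp: "s > 0" using Cp np by (simp add: s_def)
  have sR: "sqrt R = s" using sp by (simp add: R_def)
  define \<sigma> where "\<sigma> = restrict (\<lambda>\<nu>. sign_pm (cos (\<theta> \<nu>))) {0..<n}"
  have \<sigma>E: "\<sigma> \<in> {0..<n} \<rightarrow>\<^sub>E {-1, 1}" by (simp add: \<sigma>_def sign_pm_def)
  have sinv: "\<And>\<nu>. \<nu> < n \<Longrightarrow> sin (\<theta> \<nu>) = \<omega> \<nu> / (k \<nu> * sqrt R)"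
  proof -
    fix \<nu> assume v: "\<nu> < n"
    have kp: "k \<nu> > 0" using IC3_pos v by simp
    have "\<omega> \<nu> = k \<nu> * sin (\<theta> \<nu>) * s" using eqs2[OF v] by (simp add: s_def)
    then show "sin (\<theta> \<nu>) = \<omega> \<nu> / (k \<nu> * sqrt R)" using kp sp by (simp add: sR field_simps)
  qed
  have nn: "\<And>\<nu>. \<nu> < n \<Longrightarrow> (k \<nu>)\<^sup>2 * R - (\<omega> \<nu>)\<^sup>2 = (k \<nu> * s * cos (\<theta> \<nu>))\<^sup>2"
  proof -
    fix \<nu> assume "\<nu> < n"
    have "\<omega> \<nu> = k \<nu> * s * sin (\<theta> \<nu>)" using eqs2[OF \<open>\<nu> < n\<close>] by (simp add: s_def)
    then show "(k \<nu>)\<^sup>2 * R - (\<omega> \<nu>)\<^sup>2 = (k \<nu> * s * cos (\<theta> \<nu>))\<^sup>2"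
      by (simp add: R_def power_mult_distrib cos_squared_eq algebra_simps)
  qed
  have sq: "\<And>\<mu>. \<mu> < n \<Longrightarrow> \<sigma> \<mu> * sqrt ((k \<mu>)\<^sup>2 * R - (\<omega> \<mu>)\<^sup>2) = s * (k \<mu> * cos (\<theta> \<mu>))"
  proof -
    fix \<mu> assume m: "\<mu> < n"
    have "sqrt ((k \<mu>)\<^sup>2 * R - (\<omega> \<mu>)\<^sup>2) = k \<mu> * s * \<bar>cos (\<theta> \<mu>)\<bar>"
      using nn[OF m] IC3_pos m sp by (simp add: abs_mult less_imp_le)
    then show "\<sigma> \<mu> * sqrt ((k \<mu>)\<^sup>2 * R - (\<omega> \<mu>)\<^sup>2) = s * (k \<mu> * cos (\<theta> \<mu>))"
      using m sign_abs[of "cos (\<theta> \<mu>)"] by (simp add: \<sigma>_def algebra_simps)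
  qed
  have "(1 / real n) * (\<Sum>\<mu><n. \<sigma> \<mu> * sqrt ((k \<mu>)\<^sup>2 * R - (\<omega> \<mu>)\<^sup>2)) = (1 / real n) * (s * C)"
    using sq by (simp add: C_def sum_distrib_left)
  also have "\<dots> = R" using np by (simp add: R_def s_def power2_eq_square)
  finally have Req: "R = (1 / real n) * (\<Sum>\<mu><n. \<sigma> \<mu> * sqrt ((k \<mu>)\<^sup>2 * R - (\<omega> \<mu>)\<^sup>2))" by simp
  have RR: "R \<in> Rset n \<omega> k \<sigma>"
  proof -
    have "R > 0" using sp by (simp add: R_def)
    moreover have "\<forall>\<mu><n. (k \<mu>)\<^sup>2 * R - (\<omega> \<mu>)\<^sup>2 \<ge> 0" using nn by simp
    ultimately show ?thesis unfolding Rset_def using Req by blast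
  qed
  have "\<theta> \<in> Theta_sigma n \<omega> k \<sigma>"
    unfolding Theta_sigma_def using RR thE sinv by (auto simp: \<sigma>_def)
  then show "\<theta> \<in> (\<Union>\<sigma> \<in> {0..<n} \<rightarrow>\<^sub>E {-1, 1}. Theta_sigma n \<omega> k \<sigma>)" using \<sigma>E by blast
next
  have np: "real n > 0" using assms(1) by simp
  fix \<theta> assume "\<theta> \<in> (\<Union>\<sigma> \<in> {0..<n} \<rightarrow>\<^sub>E {-1, 1}. Theta_sigma n \<omega> k \<sigma>)"
  then obtain \<sigma> R where RR: "R \<in> Rset n \<omega> k \<sigma>" and thE: "\<theta> \<in> {0..<n} \<rightarrow>\<^sub>E {-pi<..pi}"
    and sinv: "\<And>\<nu>. \<nu> < n \<Longrightarrow> sin (\<theta> \<nu>) = \<omega> \<nu> / (k \<nu> * sqrt R)"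
    and sgn: "\<And>\<nu>. \<nu> < n \<Longrightarrow> sign_pm (cos (\<theta> \<nu>)) = \<sigma> \<nu>"
    unfolding Theta_sigma_def by auto
  have Rp: "R > 0" and nn: "\<And>\<mu>. \<mu> < n \<Longrightarrow> (k \<mu>)\<^sup>2 * R - (\<omega> \<mu>)\<^sup>2 \<ge> 0"
    and Req: "R = (1 / real n) * (\<Sum>\<mu><n. \<sigma> \<mu> * sqrt ((k \<mu>)\<^sup>2 * R - (\<omega> \<mu>)\<^sup>2))"
    using RR by (auto simp: Rset_def)
  define s where "s = sqrt R"
  have sp: "s > 0" using Rp by (simp add: s_def)
  define C where "C = (\<Sum>\<mu><n. k \<mu> * cos (\<theta> \<mu>))"
  define S where "S = (\<Sum>\<mu><n. k \<mu> * sin (\<theta> \<mu>))"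
  have kc: "\<And>\<mu>. \<mu> < n \<Longrightarrow> k \<mu> * cos (\<theta> \<mu>) = \<sigma> \<mu> * sqrt ((k \<mu>)\<^sup>2 * R - (\<omega> \<mu>)\<^sup>2) / s"
  proof -
    fix \<mu> assume m: "\<mu> < n"
    have "k \<mu> * cos (\<theta> \<mu>) = sign_pm (cos (\<theta> \<mu>)) * sqrt ((k \<mu>)\<^sup>2 * R - (\<omega> \<mu>)\<^sup>2) / s"
      using cos_from_sin[OF sp s_def, of "k \<mu>" "\<theta> \<mu>" "\<omega> \<mu>"] IC3_pos sinv[OF m] nn[OF m] m
      by (simp add: s_def)
    then show "k \<mu> * cos (\<theta> \<mu>) = \<sigma> \<mu> * sqrt ((k \<mu>)\<^sup>2 * R - (\<omega> \<mu>)\<^sup>2) / s"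
      using sgn[OF m] by simp
  qed
  have "C = (\<Sum>\<mu><n. \<sigma> \<mu> * sqrt ((k \<mu>)\<^sup>2 * R - (\<omega> \<mu>)\<^sup>2)) / s"
    unfolding C_def by (simp add: kc sum_divide_distrib)
  also have "\<dots> = real n * R / s" using Req np by (simp add: field_simps)
  also have "\<dots> = real n * s" using sp by (simp add: s_def field_simps)
  finally have Cv: "C = real n * s" .
  have ks: "\<And>\<mu>. \<mu> < n \<Longrightarrow> k \<mu> * sin (\<theta> \<mu>) = \<omega> \<mu> / s"
  proof -
    fix \<mu> assume m: "\<mu> < n"
    have "k \<mu> > 0" using IC3_pos m by simp
    then show "k \<mu> * sin (\<theta> \<mu>) = \<omega> \<mu> / s" using sinv[OF m] sp by (simp add: s_def field_simps)
  qed
  have S0: "S = 0" unfolding S_def using IC1 by (simp add: ks flip: sum_divide_distrib)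
  have eqs: "\<forall>\<nu><n. \<omega> \<nu> = (1 / real n) * (\<Sum>\<mu><n. k \<nu> * k \<mu> * sin (\<theta> \<nu> - \<theta> \<mu>))"
  proof (intro allI impI)
    fix \<nu> assume v: "\<nu> < n"
    have "(1 / real n) * (\<Sum>\<mu><n. k \<nu> * k \<mu> * sin (\<theta> \<nu> - \<theta> \<mu>))
        = (1 / real n) * (k \<nu> * sin (\<theta> \<nu>) * C)"
      by (simp add: eq_expand C_def[symmetric] S_def[symmetric] S0)
    also have "\<dots> = \<omega> \<nu>" using ks[OF v] np sp by (simp add: Cv field_simps)
    finally show "\<omega> \<nu> = (1 / real n) * (\<Sum>\<mu><n. k \<nu> * k \<mu> * sin (\<theta> \<nu> - \<theta> \<mu>))" by simp
  qed
  have "C \<ge> 0" using Cv sp by simp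
  then show "\<theta> \<in> Theta n \<omega> k"
    unfolding Theta_def using thE eqs S0
    by (simp add: sum_exp_complex in_nonneg_reals C_def[symmetric] S_def[symmetric])
qed

end
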